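(* Let $X$ be a non-negative heavy-tailed random variable and let $h_X$ be a natural scale of $X$. Then the map $c\mapsto \mathbb{I}_{h_X}(cX)$, defined for $c>0$, is continuous at $c=1$ (where its value is $1$).
   Context: $R_Y(x):=-\log P(Y>x)$. $Y$ is heavy-tailed if $E(e^{sY})=\infty$ for all $s>0$. A natural scale of a heavy-tailed $Y$ is a concave $h:[0,\infty)\to[0,\infty)$ with $h(0)=0$, $h(x)\to\infty$, and $\liminf_{x\to\infty}R_Y(x)/h(x)=1$. For a continuous increasing $h:[0,\infty)\to[0,\infty)$ with $h(x)\to\infty$, $\mathbb{I}_h(Y):=\liminf_{x\to\infty}R_Y(x)/h(x)$, which equals $\sup\{s\ge0: E(e^{s h(Y)})<\infty\}$ for non-negative $Y$. *)

theory Defs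
  imports "HOL-Probability.Probability"
begin

definition tail_exponent :: "'a measure \<Rightarrow> ('a \<Rightarrow> real) \<Rightarrow> real \<Rightarrow> ereal" where
  "tail_exponent M Y x =
     (let p = measure M {\<omega> \<in> space M. Y \<omega> > x}
      in if p = 0 then \<infinity> else ereal (- ln p))"

definition I_scale :: "'a measure \<Rightarrow> (real \<Rightarrow> real) \<Rightarrow> ('a \<Rightarrow> real) \<Rightarrow> ereal" where
  "I_scale M h Y = Liminf at_top (\<lambda>x. tail_exponent M Y x / ereal (h x))"

definition heavy_tailed :: "'a measure \<Rightarrow> ('a \<Rightarrow> real) \<Rightarrow> bool" where
  "heavy_tailed M Y \<longleftrightarrow> (\<forall>s>0. (\<integral>\<^sup>+ \<omega>. ennreal (exp (s * Y \<omega>)) \<partial>M) = \<infinity>)"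

definition natural_scale :: "'a measure \<Rightarrow> ('a \<Rightarrow> real) \<Rightarrow> (real \<Rightarrow> real) \<Rightarrow> bool" where
  "natural_scale M Y h \<longleftrightarrow>
     concave_on {0..} h \<and> (\<forall>x\<ge>0. h x \<ge> 0) \<and> h 0 = 0 \<and>
     filterlim h at_top at_top \<and>
     Liminf at_top (\<lambda>x. tail_exponent M Y x / ereal (h x)) = 1"

end

theory Submission
  imports Defs
begin

lemma ediv_lower:
  fixes T :: ereal
  assumes "T \<ge> 0" "a > 0" "b > 0" "k > 0" "a \<le> k * b"
  shows "ereal (1/k) * (T / ereal b) \<le> T / ereal a"
proof (cases T)
  case (real r)
  then have r: "r \<ge> 0" using assms by simp
  have "(1/k) * (r / b) = r / (k*b)" by (simp add: field_simps)
  also have "\<dots> \<le> r / a" using assms r by (intro divide_left_mono) auto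
  finally show ?thesis using real assms by simp
next
  case PInf then show ?thesis using assms by simp
next
  case MInf then show ?thesis using assms by simp
qed

lemma ediv_upper:
  fixes T :: ereal
  assumes "T \<ge> 0" "a > 0" "b > 0" "k > 0" "k * b \<le> a"
  shows "T / ereal a \<le> ereal (1/k) * (T / ereal b)"
proof (cases T)
  case (real r)
  then have r: "r \<ge> 0" using assms by simp
  have "r / a \<le> r / (k*b)" using assms r by (intro divide_left_mono) auto
  also have "\<dots> = (1/k) * (r / b)" by (simp add: field_simps)
  finally show ?thesis using real assms by simp
next
  case PInf then show ?thesis using assms by simp
next
  case MInf then show ?thesis using assms by simp
qed

lemma concave_scale:
  fixes h :: "real \<Rightarrow> real"
  assumes "concave_on {0..} h" "h 0 = 0" "0 \<le> t" "t \<le> 1" "0 \<le> x"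
  shows "t * h x \<le> h (t * x)"
  using concave_onD[OF assms(1), of t 0 x] assms by simp

lemma concave_mono:
  fixes h :: "real \<Rightarrow> real"
  assumes "concave_on {0..} h" "filterlim h at_top at_top" "0 \<le> x" "x \<le> y"
  shows "h x \<le> h y"
proof (cases "x = y")
  case True then show ?thesis by simp
next
  case False
  then have xy: "x < y" using assms by simp
  have "eventually (\<lambda>z. h z \<ge> h x \<and> z > y) at_top"
  proof -
    have "eventually (\<lambda>z. h z \<ge> h x) at_top" using assms(2) by (simp add: filterlim_at_top)
    then show ?thesis using eventually_gt_at_top[of y] by (rule eventually_conj)
  qed
  then obtain z where z: "h z \<ge> h x" "z > y" by (auto dest: eventually_happens)
  define t where "t = (y - x) / (z - x)"
  have t: "0 \<le> t" "t \<le> 1" using xy z by (auto simp: t_def field_simps)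
  have tz: "t * (z - x) = y - x" using xy z by (simp add: t_def)
  have "(1 - t) *\<^sub>R x + t *\<^sub>R z = x + t * (z - x)" by (simp add: algebra_simps)
  also have "\<dots> = y" using tz by simp
  finally have "(1 - t) *\<^sub>R x + t *\<^sub>R z = y" .
  then have "h y \<ge> (1 - t) * h x + t * h z"
    using concave_onD[OF assms(1) t, of x z] assms xy z by simp
  moreover have "(1 - t) * h x + t * h z \<ge> (1 - t) * h x + t * h x"
    using t z by (intro add_left_mono mult_left_mono) auto
  ultimately show ?thesis by (simp add: algebra_simps)
qed

lemma tail_nonneg:
  assumes "prob_space M"
  shows "tail_exponent M Y x \<ge> 0"
proof -
  interpret prob_space M by fact
  let ?p = "measure M {\<omega> \<in> space M. Y \<omega> > x}"
  have "?p \<le> 1" by simp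
  moreover have "?p \<ge> 0" by simp
  moreover have "?p \<noteq> 0 \<Longrightarrow> ln ?p \<le> 0"
    using \<open>?p \<le> 1\<close> \<open>?p \<ge> 0\<close> by (metis ln_le_zero_iff order_le_less)
  ultimately show ?thesis unfolding tail_exponent_def Let_def
    by auto
qed

lemma tail_scale:
  assumes "c > 0"
  shows "tail_exponent M (\<lambda>\<omega>. c * X \<omega>) x = tail_exponent M X (x / c)"
proof -
  have "{\<omega> \<in> space M. c * X \<omega> > x} = {\<omega> \<in> space M. X \<omega> > x / c}"
    using assms by (auto simp: pos_divide_less_eq mult.commute)
  then show ?thesis unfolding tail_exponent_def by simp
qed

lemma I_bounds:
  fixes M :: "'a measure" and X :: "'a \<Rightarrow> real" and h :: "real \<Rightarrow> real"
  assumes P: "prob_space M" and ns: "natural_scale M X h" and c: "c > 0"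
  shows "ereal (min 1 (1/c)) \<le> I_scale M h (\<lambda>\<omega>. c * X \<omega>) \<and>
         I_scale M h (\<lambda>\<omega>. c * X \<omega>) \<le> ereal (max 1 (1/c))"
proof -
  have conc: "concave_on {0..} h" and h0: "h 0 = 0" and lim: "filterlim h at_top at_top"
    and L: "Liminf at_top (\<lambda>x. tail_exponent M X x / ereal (h x)) = 1"
    using ns by (auto simp: natural_scale_def)
  define T where "T = tail_exponent M X"
  define f where "f = (\<lambda>x. T x / ereal (h x))"
  have Tnn: "\<And>x. T x \<ge> 0" unfolding T_def using tail_nonneg[OF P] .
  have Fm: "filtermap (\<lambda>x. x / c) at_top = at_top"
  proof (rule filtermap_fun_inverse[of "\<lambda>x. c * x"])
    show "filterlim (\<lambda>x. c * x) at_top at_top"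
      using c by (intro filterlim_tendsto_pos_mult_at_top[OF tendsto_const]) (auto simp: filterlim_ident)
    have "filterlim (\<lambda>x. (1/c) * x) at_top at_top"
      using c by (intro filterlim_tendsto_pos_mult_at_top[OF tendsto_const]) (auto simp: filterlim_ident)
    then show "filterlim (\<lambda>x. x / c) at_top at_top" by simp
    show "eventually (\<lambda>x. c * x / c = x) at_top" using c by simp
  qed
  have Lc: "Liminf at_top (\<lambda>x. f (x / c)) = 1"
  proof -
    have "inj (\<lambda>x::real. x / c)" using c by (auto simp: inj_def)
    then have "Liminf (filtermap (\<lambda>x. x / c) at_top) f = Liminf at_top (\<lambda>x. f (x / c))"
      by (rule Liminf_filtermap_eq)
    then show ?thesis using Fm L by (simp add: f_def T_def)
  qed
  have evh: "eventually (\<lambda>x. h x > 0) at_top"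
    using lim by (simp add: filterlim_at_top_dense)
  have evhc: "eventually (\<lambda>x. h (x / c) > 0) at_top"
  proof -
    have "eventually (\<lambda>x. h x > 0) (filtermap (\<lambda>x. x / c) at_top)" using evh Fm by simp
    then show ?thesis by (simp add: eventually_filtermap)
  qed
  have ev: "eventually (\<lambda>x. ereal (min 1 (1/c)) * f (x / c) \<le> T (x/c) / ereal (h x) \<and>
                T (x/c) / ereal (h x) \<le> ereal (max 1 (1/c)) * f (x / c)) at_top"
    using evh evhc eventually_ge_at_top[of 0]
  proof eventually_elim
    case (elim x)
    have xc: "x / c \<ge> 0" using elim c by simp
    show ?case
    proof (cases "c \<ge> 1")
      case True
      have "x / c \<le> x" using mult_left_mono[OF True, of x] elim c by (simp add: divide_le_eq)
      then have a: "h (x/c) \<le> h x" using concave_mono[OF conc lim xc] by blast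
      have b: "(1/c) * h x \<le> h ((1/c) * x)" using concave_scale[OF conc h0, of "1/c" x] True elim c by simp
      have b': "h x \<le> c * h (x/c)" using b c by (simp add: field_simps)
      have m: "min 1 (1/c) = 1/c" "max 1 (1/c) = 1/(1::real)" using True c by auto
      show ?thesis unfolding f_def m
        using ediv_lower[OF Tnn, of "h x" "h (x/c)" c] ediv_upper[OF Tnn, of "h x" "h (x/c)" 1] elim c b' a
        by auto
    next
      case False
      have "x * c \<le> x" using mult_left_mono[of c 1 x] False elim by simp
      then have a: "h x \<le> h (x/c)" using concave_mono[OF conc lim, of x "x/c"] elim c
        by (simp add: le_divide_eq)
      have b: "c * h (x/c) \<le> h (c * (x/c))" using concave_scale[OF conc h0, of c "x/c"] False elim c by simp
      then have b': "c * h (x/c) \<le> h x" using c by simp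
      have m: "min 1 (1/c) = 1/(1::real)" "max 1 (1/c) = 1/c" using False c by auto
      show ?thesis unfolding f_def m
        using ediv_lower[OF Tnn, of "h x" "h (x/c)" 1] ediv_upper[OF Tnn, of "h x" "h (x/c)" c] elim c b' a
        by auto
    qed
  qed
  have eq: "I_scale M h (\<lambda>\<omega>. c * X \<omega>) = Liminf at_top (\<lambda>x. T (x/c) / ereal (h x))"
    unfolding I_scale_def T_def by (simp only: tail_scale[OF c, of M X])
  have lo: "Liminf at_top (\<lambda>x. ereal (min 1 (1/c)) * f (x / c)) = ereal (min 1 (1/c))"
    using Liminf_ereal_mult_left[of at_top "min 1 (1/c)" "\<lambda>x. f (x/c)"] c Lc by simp
  have hi: "Liminf at_top (\<lambda>x. ereal (max 1 (1/c)) * f (x / c)) = ereal (max 1 (1/c))"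
    using Liminf_ereal_mult_left[of at_top "max 1 (1/c)" "\<lambda>x. f (x/c)"] c Lc by simp
  have "Liminf at_top (\<lambda>x. ereal (min 1 (1/c)) * f (x / c)) \<le> Liminf at_top (\<lambda>x. T (x/c) / ereal (h x))"
    by (rule Liminf_mono) (use ev in \<open>auto elim: eventually_mono\<close>)
  moreover have "Liminf at_top (\<lambda>x. T (x/c) / ereal (h x)) \<le> Liminf at_top (\<lambda>x. ereal (max 1 (1/c)) * f (x / c))"
    by (rule Liminf_mono) (use ev in \<open>auto elim: eventually_mono\<close>)
  ultimately show ?thesis using lo hi eq by simp
qed

theorem lemma4p2:
  fixes M :: "'a measure" and X :: "'a \<Rightarrow> real" and h :: "real \<Rightarrow> real"
  assumes "prob_space M"
    and "X \<in> borel_measurable M"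
    and "\<forall>\<omega>\<in>space M. X \<omega> \<ge> 0"
    and "heavy_tailed M X"
    and "natural_scale M X h"
  shows "I_scale M h (\<lambda>\<omega>. 1 * X \<omega>) = 1 \<and>
         continuous (at 1 within {0<..}) (\<lambda>c::real. I_scale M h (\<lambda>\<omega>. c * X \<omega>))"
proof -
  let ?I = "\<lambda>c::real. I_scale M h (\<lambda>\<omega>. c * X \<omega>)"
  have B: "\<And>c. c > 0 \<Longrightarrow> ereal (min 1 (1/c)) \<le> ?I c \<and> ?I c \<le> ereal (max 1 (1/c))"
    using I_bounds[OF assms(1) assms(5)] by blast
  have one: "?I 1 = 1" using B[of 1] by (simp add: antisym one_ereal_def)
  have "(?I \<longlongrightarrow> 1) (at 1 within {0<..})"
  proof (rule tendsto_sandwich[of "\<lambda>c. ereal (min 1 (1/c))" _ _ "\<lambda>c. ereal (max 1 (1/c))"])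
    show "eventually (\<lambda>c. ereal (min 1 (1/c)) \<le> ?I c) (at 1 within {0<..})"
      using B by (auto simp: eventually_at_filter)
    show "eventually (\<lambda>c. ?I c \<le> ereal (max 1 (1/c))) (at 1 within {0<..})"
      using B by (auto simp: eventually_at_filter)
    have "((\<lambda>c::real. min 1 (1/c)) \<longlongrightarrow> min 1 (1/1)) (at 1 within {0<..})"
      by (intro tendsto_intros) auto
    from tendsto_ereal[OF this] show "((\<lambda>c. ereal (min 1 (1/c))) \<longlongrightarrow> 1) (at 1 within {0<..})"
      by (simp add: one_ereal_def)
    have "((\<lambda>c::real. max 1 (1/c)) \<longlongrightarrow> max 1 (1/1)) (at 1 within {0<..})"
      by (intro tendsto_intros) auto
    from tendsto_ereal[OF this] show "((\<lambda>c. ereal (max 1 (1/c))) \<longlongrightarrow> 1) (at 1 within {0<..})"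
      by (simp add: one_ereal_def)
  qed
  then show ?thesis using one by (simp add: continuous_within)
qed

end
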